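(* Let $\mathcal{B}=\{(b,m): m>1,\ b\in B_m\}$. Let $\cong$ be the equivalence relation on $\mathcal{B}$ generated by: (1) for $m>1$ and $a,b\in B_m$, $(b,m)\cong(aba^{-1},m)$; (2) for $m>1$ and any word $\prod_{k=1}^{\ell}\sigma_{i_k}^{\epsilon_k}$ with $1\le i_k\le m-1$, $\epsilon_k\in\{1,-1\}$, $\left(\prod_{k=1}^{\ell}\sigma_{i_k}^{\epsilon_k},m\right)\cong\left(\sigma_1\prod_{k=1}^{\ell}\sigma_{i_k+1}^{\epsilon_k},m+1\right)$; (3) for such words, $\left(\prod_{k=1}^{\ell}\sigma_{i_k}^{\epsilon_k},m\right)\cong\left(\sigma_1^{-1}\prod_{k=1}^{\ell}\sigma_{i_k+1}^{\epsilon_k},m+1\right)$. Then $\cong$ coincides with the Markov equivalence $\sim$ on $\mathcal{B}$.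
   Context: For $n\ge 2$, $B_n$ is the braid group with generators $\sigma_1,\dots,\sigma_{n-1}$ and relations $\sigma_i\sigma_j=\sigma_j\sigma_i$ for $|i-j|\ge 2$ and $\sigma_i\sigma_{i+1}\sigma_i=\sigma_{i+1}\sigma_i\sigma_{i+1}$. For $m<n$, $B_m$ is identified with its image in $B_n$ under the homomorphism sending $\sigma_i\mapsto\sigma_i$. The Markov equivalence $\sim$ on $\mathcal{B}$ is the equivalence relation generated by: $(b,m)\sim(aba^{-1},m)$ for $a,b\in B_m$; $(b,m)\sim(\sigma_m b,m+1)$ for $b\in B_m$; $(b,m)\sim(\sigma_m^{-1}b,m+1)$ for $b\in B_m$. *)

theory Defs
  imports Main
begin

text \<open>Braid words: a letter (i, True) stands for sigma_i, (i, False) for sigma_i^{-1}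
  (generators are 1-indexed). A word is a letter list, read left to right as a product.\<close>

type_synonym bletter = "nat \<times> bool"
type_synonym bword = "bletter list"

definition valid_word :: "nat \<Rightarrow> bword \<Rightarrow> bool" where
  "valid_word m w \<longleftrightarrow> (\<forall>(i, e) \<in> set w. 1 \<le> i \<and> i \<le> m - 1)"

definition inv_word :: "bword \<Rightarrow> bword" where
  "inv_word w = rev (map (\<lambda>(i, e). (i, \<not> e)) w)"

definition shift_word :: "bword \<Rightarrow> bword" where
  "shift_word w = map (\<lambda>(i, e). (i + 1, e)) w"

inductive braid_rel :: "nat \<Rightarrow> bword \<Rightarrow> bword \<Rightarrow> bool" for m where
  cancel: "1 \<le> i \<Longrightarrow> i \<le> m - 1 \<Longrightarrow> braid_rel m [(i, e), (i, \<not> e)] []"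
| comm: "1 \<le> i \<Longrightarrow> i \<le> m - 1 \<Longrightarrow> 1 \<le> j \<Longrightarrow> j \<le> m - 1 \<Longrightarrow> i + 2 \<le> j \<or> j + 2 \<le> i
          \<Longrightarrow> braid_rel m [(i, True), (j, True)] [(j, True), (i, True)]"
| braid: "1 \<le> i \<Longrightarrow> i + 1 \<le> m - 1
          \<Longrightarrow> braid_rel m [(i, True), (i + 1, True), (i, True)] [(i + 1, True), (i, True), (i + 1, True)]"

inductive braid_eq :: "nat \<Rightarrow> bword \<Rightarrow> bword \<Rightarrow> bool" for m where
  refl: "valid_word m w \<Longrightarrow> braid_eq m w w"
| rel: "braid_rel m u v \<Longrightarrow> valid_word m p \<Longrightarrow> valid_word m s \<Longrightarrow> braid_eq m (p @ u @ s) (p @ v @ s)"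
| sym: "braid_eq m w v \<Longrightarrow> braid_eq m v w"
| trans: "braid_eq m u v \<Longrightarrow> braid_eq m v w \<Longrightarrow> braid_eq m u w"

inductive markov_eq :: "bword \<times> nat \<Rightarrow> bword \<times> nat \<Rightarrow> bool" where
  same: "1 < m \<Longrightarrow> braid_eq m w w' \<Longrightarrow> markov_eq (w, m) (w', m)"
| conj: "1 < m \<Longrightarrow> valid_word m a \<Longrightarrow> valid_word m b \<Longrightarrow> markov_eq (b, m) (a @ b @ inv_word a, m)"
| stab_pos: "1 < m \<Longrightarrow> valid_word m b \<Longrightarrow> markov_eq (b, m) ((m, True) # b, m + 1)"
| stab_neg: "1 < m \<Longrightarrow> valid_word m b \<Longrightarrow> markov_eq (b, m) ((m, False) # b, m + 1)"
| sym: "markov_eq x y \<Longrightarrow> markov_eq y x"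
| trans: "markov_eq x y \<Longrightarrow> markov_eq y z \<Longrightarrow> markov_eq x z"

inductive alt_eq :: "bword \<times> nat \<Rightarrow> bword \<times> nat \<Rightarrow> bool" where
  same: "1 < m \<Longrightarrow> braid_eq m w w' \<Longrightarrow> alt_eq (w, m) (w', m)"
| conj: "1 < m \<Longrightarrow> valid_word m a \<Longrightarrow> valid_word m b \<Longrightarrow> alt_eq (b, m) (a @ b @ inv_word a, m)"
| stab_pos: "1 < m \<Longrightarrow> valid_word m w \<Longrightarrow> alt_eq (w, m) ((1, True) # shift_word w, m + 1)"
| stab_neg: "1 < m \<Longrightarrow> valid_word m w \<Longrightarrow> alt_eq (w, m) ((1, False) # shift_word w, m + 1)"
| sym: "alt_eq x y \<Longrightarrow> alt_eq y x"
| trans: "alt_eq x y \<Longrightarrow> alt_eq y z \<Longrightarrow> alt_eq x z"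

end

theory Submission
  imports Defs
begin

lemma vw_simps[simp]:
  "valid_word m []"
  "valid_word m (x # w) \<longleftrightarrow> (1 \<le> fst x \<and> fst x \<le> m - 1) \<and> valid_word m w"
  "valid_word m (u @ v) \<longleftrightarrow> valid_word m u \<and> valid_word m v"
  by (auto simp: valid_word_def split: prod.splits)

lemma inv_simps[simp]:
  "inv_word [] = []"
  "inv_word (x # w) = inv_word w @ [(fst x, \<not> snd x)]"
  "inv_word (u @ v) = inv_word v @ inv_word u"
  "inv_word (inv_word w) = w"
  "valid_word m (inv_word w) = valid_word m w"
  by (auto simp: inv_word_def valid_word_def case_prod_beta rev_map[symmetric] map_map comp_def)

lemma shift_simps[simp]:
  "shift_word [] = []"
  "shift_word (x # w) = (fst x + 1, snd x) # shift_word w"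
  "shift_word (u @ v) = shift_word u @ shift_word v"
  by (auto simp: shift_word_def case_prod_beta)

lemma vw_mono: "valid_word m w \<Longrightarrow> m \<le> n \<Longrightarrow> valid_word n w"
  by (induction w) auto

lemma vw_shift: "valid_word m w \<Longrightarrow> m \<le> n - 1 \<Longrightarrow> valid_word n (shift_word w)"
  by (induction w) auto

lemma br_valid: "braid_rel m u v \<Longrightarrow> valid_word m u \<and> valid_word m v"
  by (induction rule: braid_rel.induct) auto

lemma be_valid: "braid_eq m u v \<Longrightarrow> valid_word m u \<and> valid_word m v"
  by (induction rule: braid_eq.induct) (auto dest: br_valid)

lemma be_ctx: "braid_eq m u v \<Longrightarrow> valid_word m p \<Longrightarrow> valid_word m s \<Longrightarrow> braid_eq m (p@u@s) (p@v@s)"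
proof (induction arbitrary: p s rule: braid_eq.induct)
  case (refl w) then show ?case by (auto intro: braid_eq.refl)
next
  case (rel u v p' s')
  have "braid_eq m ((p@p')@u@(s'@s)) ((p@p')@v@(s'@s))"
    using rel by (intro braid_eq.rel) auto
  then show ?case by simp
next
  case (sym w v) then show ?case by (blast intro: braid_eq.sym)
next
  case (trans u v w) then show ?case by (blast intro: braid_eq.trans)
qed

lemma be_ctx': "braid_eq m u v \<Longrightarrow> valid_word m p \<Longrightarrow> valid_word m s \<Longrightarrow> x = p@u@s \<Longrightarrow> y = p@v@s \<Longrightarrow> braid_eq m x y"
  using be_ctx by blast

lemma be_app: "braid_eq m u u' \<Longrightarrow> braid_eq m v v' \<Longrightarrow> braid_eq m (u@v) (u'@v')"
proof -
  assume a: "braid_eq m u u'" and b: "braid_eq m v v'"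
  have "braid_eq m ([]@u@v) ([]@u'@v)" using a b be_valid by (intro be_ctx) auto
  moreover have "braid_eq m (u'@v@[]) (u'@v'@[])" using a b be_valid by (intro be_ctx) auto
  ultimately show ?thesis by (auto intro: braid_eq.trans)
qed

lemma be_cancel1: "1 \<le> i \<Longrightarrow> i \<le> m - 1 \<Longrightarrow> braid_eq m [(i,e),(i,\<not>e)] []"
  using braid_eq.rel[OF braid_rel.cancel[of i m e], of "[]" "[]"] by simp

lemma be_inv_right: "valid_word m w \<Longrightarrow> braid_eq m (w @ inv_word w) []"
proof (induction w)
  case Nil then show ?case by (auto intro: braid_eq.refl)
next
  case (Cons x w)
  obtain i e where x: "x = (i,e)" by (cases x)
  have "braid_eq m ([x]@(w @ inv_word w)@[(i,\<not>e)]) ([x]@[]@[(i,\<not>e)])"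
    using Cons x by (intro be_ctx) auto
  moreover have "braid_eq m [(i,e),(i,\<not>e)] []" using Cons x by (intro be_cancel1) auto
  ultimately show ?case using x by (auto intro: braid_eq.trans)
qed

lemma be_inv_left: "valid_word m w \<Longrightarrow> braid_eq m (inv_word w @ w) []"
  using be_inv_right[of m "inv_word w"] by simp

lemma be_cancel_mid: "valid_word m p \<Longrightarrow> valid_word m s \<Longrightarrow> valid_word m w \<Longrightarrow> braid_eq m (p @ w @ inv_word w @ s) (p @ s)"
  using be_ctx[OF be_inv_right[of m w], of p s] by simp

lemma be_cancel_mid2: "valid_word m p \<Longrightarrow> valid_word m s \<Longrightarrow> valid_word m w \<Longrightarrow> braid_eq m (p @ inv_word w @ w @ s) (p @ s)"
  using be_ctx[OF be_inv_left[of m w], of p s] by simp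

lemma be_comm_list:
  assumes "\<forall>k\<in>set w. 1 \<le> k \<and> k \<le> n - 1 \<and> (k + 2 \<le> j \<or> j + 2 \<le> k)" "1 \<le> j" "j \<le> n - 1"
  shows "braid_eq n (map (\<lambda>i. (i,True)) w @ [(j,True)]) ((j,True) # map (\<lambda>i. (i,True)) w)"
  using assms
proof (induction w)
  case Nil then show ?case by (auto intro: braid_eq.refl)
next
  case (Cons k w)
  let ?W = "map (\<lambda>i. (i,True)) w"
  have v: "valid_word n ?W" using Cons by (auto simp: valid_word_def)
  have "braid_eq n ([(k,True)] @ (?W @ [(j,True)]) @ []) ([(k,True)] @ ((j,True) # ?W) @ [])"
    using Cons by (intro be_ctx) auto
  moreover have "braid_eq n ([] @ [(k,True),(j,True)] @ ?W) ([] @ [(j,True),(k,True)] @ ?W)"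
    using Cons v by (intro braid_eq.rel braid_rel.comm) auto
  ultimately show ?case by (auto intro: braid_eq.trans)
qed

definition D :: "nat \<Rightarrow> bword" where "D k = map (\<lambda>i. (i,True)) [1..<Suc k]"

lemma D_valid: "k \<le> n - 1 \<Longrightarrow> valid_word n (D k)"
  by (auto simp: D_def valid_word_def)

lemma D_Suc: "D (Suc k) = D k @ [(Suc k, True)]"
  by (simp add: D_def)

lemma D_Suc2: "D (Suc k) = (1,True) # shift_word (D k)"
  by (simp add: D_def shift_word_def map_Suc_upt[symmetric] upt_conv_Cons del: upt_Suc)

lemma L1:
  assumes "1 \<le> i" "i + 1 \<le> m" "m \<le> n - 1"
  shows "braid_eq n (D m @ [(i,True)]) ((i+1,True) # D m)"
proof -
  let ?f = "\<lambda>i. (i,True)"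
  define P where "P = map ?f [1..<i]"
  define R where "R = map ?f [i+2..<Suc m]"
  have up: "[1..<Suc m] = [1..<i] @ [i, i+1] @ [i+2..<Suc m]"
  proof -
    have "[1..<Suc m] = [1..<i] @ [i..<Suc m]" using upt_add_eq_append[of 1 i "Suc m - i"] assms by simp
    moreover have "[i..<Suc m] = i # [Suc i..<Suc m]" using assms by (intro upt_conv_Cons) auto
    moreover have "[Suc i..<Suc m] = Suc i # [i+2..<Suc m]" using assms by (subst upt_conv_Cons) auto
    ultimately show ?thesis by simp
  qed
  have Dm: "D m = P @ [(i,True),(i+1,True)] @ R" unfolding D_def P_def R_def up by simp
  have vP: "valid_word n P" using assms by (auto simp: P_def valid_word_def)
  have vR: "valid_word n R" using assms by (auto simp: R_def valid_word_def)
  have "braid_eq n (R @ [(i,True)]) ((i,True) # R)"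
    unfolding R_def using assms by (intro be_comm_list) auto
  then have s1: "braid_eq n (D m @ [(i,True)]) (P @ [(i,True),(i+1,True),(i,True)] @ R)"
    using be_ctx[of n "R @ [(i,True)]" "(i,True) # R" "P @ [(i,True),(i+1,True)]" "[]"] vP assms unfolding Dm by simp
  have s2: "braid_eq n (P @ [(i,True),(i+1,True),(i,True)] @ R) (P @ [(i+1,True),(i,True),(i+1,True)] @ R)"
    using braid_eq.rel[OF braid_rel.braid[of i n], of P R] vP vR assms by simp
  have "braid_eq n (P @ [(i+1,True)]) ((i+1,True) # P)"
    unfolding P_def using assms by (intro be_comm_list) auto
  then have s3: "braid_eq n (P @ [(i+1,True),(i,True),(i+1,True)] @ R) ((i+1,True) # D m)"
    using be_ctx[of n "P @ [(i+1,True)]" "(i+1,True) # P" "[]" "[(i,True),(i+1,True)] @ R"] vR assms unfolding Dm by simp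
  show ?thesis using s1 s2 s3 by (blast intro: braid_eq.trans)
qed

lemma conj_flip:
  assumes h: "braid_eq n (a @ [(i,True)]) ((j,True) # a)"
  shows "braid_eq n (a @ [(i,False)]) ((j,False) # a)"
proof -
  have v: "valid_word n a" "1 \<le> i" "i \<le> n - 1" "1 \<le> j" "j \<le> n - 1"
    using be_valid[OF h] by auto
  have s1: "braid_eq n ((j,False) # (j,True) # a @ [(i,False)]) (a @ [(i,False)])"
    using be_cancel_mid[of n "[]" "a @ [(i,False)]" "[(j,False)]"] v by simp
  have s2: "braid_eq n ((j,False) # (j,True) # a @ [(i,False)]) ((j,False) # a @ [(i,True),(i,False)])"
    using be_ctx[OF braid_eq.sym[OF h], of "[(j,False)]" "[(i,False)]"] v by simp
  have s3: "braid_eq n ((j,False) # a @ [(i,True),(i,False)]) ((j,False) # a)"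
    using be_cancel_mid[of n "(j,False)#a" "[]" "[(i,True)]"] v by simp
  show ?thesis using s1 s2 s3 by (meson braid_eq.trans braid_eq.sym)
qed

lemma D_letter:
  assumes "1 \<le> i" "i + 1 \<le> m" "m \<le> n - 1"
  shows "braid_eq n (D m @ [(i,e)]) ((i+1,e) # D m)"
  using L1[OF assms] conj_flip by (cases e) auto

lemma D_shift:
  assumes "valid_word m b" "m \<le> n - 1"
  shows "braid_eq n (D m @ b) (shift_word b @ D m)"
  using assms
proof (induction b)
  case Nil then show ?case using D_valid by (auto intro: braid_eq.refl)
next
  case (Cons x b)
  obtain i e where x: "x = (i,e)" by (cases x)
  have "braid_eq n ((D m @ [(i,e)]) @ b) (((i+1,e) # D m) @ b)"
    using Cons x be_valid by (intro be_app D_letter braid_eq.refl vw_mono[of m b n]) auto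
  moreover have "braid_eq n ([(i+1,e)] @ (D m @ b) @ []) ([(i+1,e)] @ (shift_word b @ D m) @ [])"
    using Cons x by (intro be_ctx) auto
  ultimately show ?case using x by (auto intro: braid_eq.trans)
qed

lemma L2:
  assumes "1 \<le> m" "m \<le> n - 1"
  shows "braid_eq n ((D m @ D (m-1)) @ [(m,e)]) ((1,e) # (D m @ D (m-1)))"
proof -
  obtain k where k: "m = Suc k" using assms by (cases m) auto
  have c: "braid_eq n ([(1,True)] @ (D (Suc k) @ D k) @ []) ([(1,True)] @ (shift_word (D k) @ D (Suc k)) @ [])"
    using assms k by (intro be_ctx D_shift D_valid) auto
  have e1: "D (Suc k) @ D (Suc k) = (D (Suc k) @ D k) @ [(Suc k, True)]" by (metis D_Suc append_assoc)
  have e2: "[(1,True)] @ (shift_word (D k) @ D (Suc k)) @ [] = D (Suc k) @ D (Suc k)"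
    by (metis D_Suc2 append_Cons append_Nil append_Nil2)
  have "braid_eq n ([(1,True)] @ (D (Suc k) @ D k) @ []) ((D (Suc k) @ D k) @ [(Suc k,True)])"
    using c unfolding e2 e1 .
  then have "braid_eq n ((D m @ D (m-1)) @ [(m,True)]) ((1,True) # (D m @ D (m-1)))"
    using k by (auto intro: braid_eq.sym)
  then show ?thesis using conj_flip[of n "D m @ D (m-1)" m 1] by (cases e) auto
qed

lemma key:
  assumes "valid_word m c" "1 \<le> m"
  shows "braid_eq (Suc m) ((D m @ D (m-1)) @ ((m,e) # inv_word (D (m-1)) @ c @ D (m-1)) @ inv_word (D m @ D (m-1)))
           ((1,e) # shift_word c)"
proof -
  let ?X = "D (m-1)" let ?D = "D m"
  have vc1: "valid_word (Suc m) c" by (rule vw_mono[OF assms(1)]) simp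
  have vX: "valid_word (Suc m) ?X" "valid_word (Suc m) ?D" "valid_word (Suc m) c"
    using assms D_valid vc1 by auto
  have vs: "valid_word (Suc m) (shift_word c)" using vw_shift[OF assms(1), of "Suc m"] by simp
  have s1: "braid_eq (Suc m) ((?D @ ?X) @ ((m,e) # inv_word ?X @ c @ ?X) @ inv_word (?D @ ?X))
     ((1,e) # ?D @ ?X @ inv_word ?X @ c @ ?X @ inv_word ?X @ inv_word ?D)"
    using be_ctx[OF L2[of m "Suc m" e], of "[]" "inv_word ?X @ c @ ?X @ inv_word ?X @ inv_word ?D"] vX assms
    by simp
  have s2: "braid_eq (Suc m) ((1,e) # ?D @ ?X @ inv_word ?X @ c @ ?X @ inv_word ?X @ inv_word ?D)
     ((1,e) # ?D @ c @ ?X @ inv_word ?X @ inv_word ?D)"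
    using be_cancel_mid[of "Suc m" "(1,e) # ?D" "c @ ?X @ inv_word ?X @ inv_word ?D" ?X] vX assms by simp
  have s3: "braid_eq (Suc m) ((1,e) # ?D @ c @ ?X @ inv_word ?X @ inv_word ?D)
     ((1,e) # ?D @ c @ inv_word ?D)"
    using be_cancel_mid[of "Suc m" "(1,e) # ?D @ c" "inv_word ?D" ?X] vX assms by simp
  have s4: "braid_eq (Suc m) ((1,e) # ?D @ c @ inv_word ?D) ((1,e) # shift_word c @ ?D @ inv_word ?D)"
    using be_ctx[OF D_shift[of m c "Suc m"], of "[(1,e)]" "inv_word ?D"] vX vc1 assms by simp
  have s5: "braid_eq (Suc m) ((1,e) # shift_word c @ ?D @ inv_word ?D) ((1,e) # shift_word c)"
    using be_cancel_mid[of "Suc m" "(1,e) # shift_word c" "[]" ?D] vX vs assms by simp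
  show ?thesis using s1 s2 s3 s4 s5 by (meson braid_eq.trans)
qed

lemma markov_stab_alt:
  assumes "1 < m" "valid_word m c"
  shows "markov_eq (c,m) ((1,e) # shift_word c, m+1)"
proof -
  let ?X = "D (m-1)" let ?A = "D m @ D (m-1)"
  let ?w = "(m,e) # inv_word ?X @ c @ ?X"
  have vX: "valid_word m ?X" using D_valid by auto
  have vA: "valid_word (m+1) ?A" using assms by (auto intro: D_valid)
  have h1: "markov_eq (c,m) (inv_word ?X @ c @ ?X, m)"
    using markov_eq.conj[of m "inv_word ?X" c] vX assms by simp
  have h2: "markov_eq (inv_word ?X @ c @ ?X, m) (?w, m+1)"
    using assms vX markov_eq.stab_pos markov_eq.stab_neg by (cases e) auto
  have vw: "valid_word (m+1) ?w" using assms vX by (auto intro: vw_mono)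
  have h3: "markov_eq (?w, m+1) (?A @ ?w @ inv_word ?A, m+1)"
    using markov_eq.conj[of "m+1" ?A ?w] vA vw assms by simp
  have h4: "markov_eq (?A @ ?w @ inv_word ?A, m+1) ((1,e) # shift_word c, m+1)"
  proof -
    have kk: "braid_eq (m+1) (?A @ ?w @ inv_word ?A) ((1,e) # shift_word c)" using key[of m c e] assms by simp
    show ?thesis using markov_eq.same[of "m+1", OF _ kk] assms by simp
  qed
  show ?thesis using h1 h2 h3 h4 by (meson markov_eq.trans)
qed

lemma alt_stab_markov:
  assumes "1 < m" "valid_word m b"
  shows "alt_eq (b,m) ((m,e) # b, m+1)"
proof -
  let ?X = "D (m-1)" let ?A = "D m @ D (m-1)"
  define c where "c = ?X @ b @ inv_word ?X"
  let ?w = "(m,e) # inv_word ?X @ c @ ?X"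
  have vX: "valid_word m ?X" using D_valid by auto
  have vc: "valid_word m c" using vX assms by (simp add: c_def)
  have vA: "valid_word (m+1) ?A" using assms by (auto intro: D_valid)
  have h1: "alt_eq (b,m) (c,m)"
    using alt_eq.conj[of m ?X b] vX assms by (simp add: c_def)
  have h2: "alt_eq (c,m) ((1,e) # shift_word c, m+1)"
    using assms vc alt_eq.stab_pos alt_eq.stab_neg by (cases e) auto
  have vw: "valid_word (m+1) ?w" using assms vX vc by (auto intro: vw_mono)
  have h3: "alt_eq ((1,e) # shift_word c, m+1) (?A @ ?w @ inv_word ?A, m+1)"
  proof -
    have kk: "braid_eq (m+1) (?A @ ?w @ inv_word ?A) ((1,e) # shift_word c)" using key[of m c e] vc assms by simp
    show ?thesis using alt_eq.same[of "m+1", OF _ braid_eq.sym[OF kk]] assms by simp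
  qed
  have h4: "alt_eq (?A @ ?w @ inv_word ?A, m+1) (?w, m+1)"
    using alt_eq.conj[of "m+1" ?A ?w] vA vw assms by (simp add: alt_eq.sym)
  have vb1: "valid_word (m+1) b" "valid_word (m+1) ?X" using assms vX by (auto intro: vw_mono)
  have "braid_eq (m+1) ((m,e) # inv_word ?X @ ?X @ b @ inv_word ?X @ ?X) ((m,e) # b @ inv_word ?X @ ?X)"
    using be_cancel_mid2[of "m+1" "[(m,e)]" "b @ inv_word ?X @ ?X" ?X] vb1 assms by simp
  moreover have "braid_eq (m+1) ((m,e) # b @ inv_word ?X @ ?X) ((m,e) # b)"
    using be_cancel_mid2[of "m+1" "(m,e) # b" "[]" ?X] vb1 assms by simp
  ultimately have "braid_eq (m+1) ?w ((m,e) # b)" unfolding c_def by (auto intro: braid_eq.trans)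
  then have h5: "alt_eq (?w, m+1) ((m,e) # b, m+1)" using assms by (intro alt_eq.same) auto
  show ?thesis using h1 h2 h3 h4 h5 by (meson alt_eq.trans)
qed

theorem theorem4p4:
  shows "alt_eq = markov_eq"
proof (intro ext iffI)
  fix x y assume "alt_eq x y" then show "markov_eq x y"
  proof (induction rule: alt_eq.induct)
    case (same m w w') then show ?case by (rule markov_eq.same)
  next
    case (conj m a b) then show ?case by (rule markov_eq.conj)
  next
    case (stab_pos m w) then show ?case by (rule markov_stab_alt)
  next
    case (stab_neg m w) then show ?case by (rule markov_stab_alt)
  next
    case (sym x y) then show ?case by (blast intro: markov_eq.sym)
  next
    case (trans x y z) then show ?case by (blast intro: markov_eq.trans)
  qed
next
  fix x y assume "markov_eq x y" then show "alt_eq x y"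
  proof (induction rule: markov_eq.induct)
    case (same m w w') then show ?case by (rule alt_eq.same)
  next
    case (conj m a b) then show ?case by (rule alt_eq.conj)
  next
    case (stab_pos m w) then show ?case by (rule alt_stab_markov)
  next
    case (stab_neg m w) then show ?case by (rule alt_stab_markov)
  next
    case (sym x y) then show ?case by (blast intro: alt_eq.sym)
  next
    case (trans x y z) then show ?case by (blast intro: alt_eq.trans)
  qed
qed

end
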